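(* Let $X$ be a finite set with $|X|\ge5$, $k$ an integer with $5<k<|X|-5$, $\mathfrak{C}$ a nonempty symmetric family of choice functions for $\binom{X}{k}$, $\mathcal{F}$ the set of simple averaging functions for $\mathfrak{C}$, and assume $r(\mathcal{F})=2$. Let $\bar a^*=(a^*_1,a^*_2,a^*_3,a^*_4)\in X^4$ be without repetition. Then there is $g\in\mathcal{F}_{[4]}$ such that $g(\bar b)=b_1$ for every $\bar b\in X^4$ with a repetition, and $g(\bar a^* )=a^*_2$.
   Context: $\binom{X}{k}=\{Y\subseteq X:|Y|=k\}$; choice functions satisfy $c(Y)\in Y$. Symmetric: closed under $c\mapsto\pi*c$, $(\pi*c)(Y)=\pi^{-1}(c(\pi(Y)))$. $\mathcal{F}_{[r]}$: functions $f:X^r\to X$ with $f(a,\dots,a)=a$ such that for all $c_1,\dots,c_r\in\mathfrak{C}$, $Y\mapsto f(c_1(Y),\dots,c_r(Y))$ is in $\mathfrak{C}$. A monarchy is a projection. $r(\mathcal{F})=\min\{r:\text{some } f\in\mathcal{F}_{[r]}\text{ is not a monarchy}\}$. *)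

theory Defs
  imports "HOL-Library.FuncSet" "HOL-Combinatorics.Permutations"
begin

definition ksubsets :: "'a set \<Rightarrow> nat \<Rightarrow> 'a set set" where
  "ksubsets X k = {Y. Y \<subseteq> X \<and> card Y = k}"

definition choice_fun :: "'a set \<Rightarrow> nat \<Rightarrow> ('a set \<Rightarrow> 'a) \<Rightarrow> bool" where
  "choice_fun X k c \<longleftrightarrow> c \<in> extensional (ksubsets X k) \<and> (\<forall>Y\<in>ksubsets X k. c Y \<in> Y)"

definition perm_act :: "'a set \<Rightarrow> nat \<Rightarrow> ('a \<Rightarrow> 'a) \<Rightarrow> ('a set \<Rightarrow> 'a) \<Rightarrow> ('a set \<Rightarrow> 'a)" where
  "perm_act X k \<pi> c = restrict (\<lambda>Y. inv_into X \<pi> (c (\<pi> ` Y))) (ksubsets X k)"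

definition symmetric_family :: "'a set \<Rightarrow> nat \<Rightarrow> ('a set \<Rightarrow> 'a) set \<Rightarrow> bool" where
  "symmetric_family X k C \<longleftrightarrow>
     (\<forall>\<pi> c. \<pi> permutes X \<longrightarrow> c \<in> C \<longrightarrow> perm_act X k \<pi> c \<in> C)"

definition tuples :: "'a set \<Rightarrow> nat \<Rightarrow> 'a list set" where
  "tuples X r = {xs. length xs = r \<and> set xs \<subseteq> X}"

definition avg_funs :: "'a set \<Rightarrow> nat \<Rightarrow> ('a set \<Rightarrow> 'a) set \<Rightarrow> nat \<Rightarrow> ('a list \<Rightarrow> 'a) set" where
  "avg_funs X k C r = {f.
     (\<forall>xs\<in>tuples X r. f xs \<in> X) \<and>
     (\<forall>a\<in>X. f (replicate r a) = a) \<and>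
     (\<forall>cs. length cs = r \<longrightarrow> set cs \<subseteq> C \<longrightarrow>
        restrict (\<lambda>Y. f (map (\<lambda>c. c Y) cs)) (ksubsets X k) \<in> C)}"

definition monarchy :: "'a set \<Rightarrow> nat \<Rightarrow> ('a list \<Rightarrow> 'a) \<Rightarrow> bool" where
  "monarchy X r f \<longleftrightarrow> (\<exists>i<r. \<forall>xs\<in>tuples X r. f xs = xs ! i)"

definition r_index_is :: "'a set \<Rightarrow> nat \<Rightarrow> ('a set \<Rightarrow> 'a) set \<Rightarrow> nat \<Rightarrow> bool" where
  "r_index_is X k C m \<longleftrightarrow>
     (\<exists>f\<in>avg_funs X k C m. \<not> monarchy X m f) \<and>
     (\<forall>r<m. \<forall>f\<in>avg_funs X k C r. monarchy X r f)"

end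

theory Submission
  imports Defs
begin


lemma perm_map:
  assumes "distinct xs" "distinct ys" "length xs = length ys" "set xs \<subseteq> X" "set ys \<subseteq> X"
  shows "\<exists>\<sigma>. \<sigma> permutes X \<and> map \<sigma> xs = ys"
  using assms
proof (induction xs arbitrary: ys)
  case Nil
  then show ?case by (auto intro: permutes_id)
next
  case (Cons x xs)
  then obtain y ys' where ys: "ys = y # ys'" by (cases ys) auto
  with Cons obtain \<sigma> where s: "\<sigma> permutes X" "map \<sigma> xs = ys'" by auto
  have inj: "inj \<sigma>" using s(1) by (rule permutes_inj)
  have nx: "\<sigma> x \<notin> set ys'"
  proof
    assume "\<sigma> x \<in> set ys'"
    then obtain z where "z \<in> set xs" "\<sigma> z = \<sigma> x" using s(2) by auto
    with inj Cons.prems(1) show False by (auto dest: injD)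
  qed
  have ny: "y \<notin> set ys'" using Cons.prems(2) ys by auto
  define \<tau> where "\<tau> = transpose (\<sigma> x) y \<circ> \<sigma>"
  have "\<tau> permutes X" unfolding \<tau>_def
    apply (rule permutes_compose[OF s(1)])
    apply (rule permutes_swap_id)
    using Cons.prems ys s(1) by (auto simp: permutes_in_image)
  moreover have "map \<tau> (x # xs) = ys"
  proof -
    have "map \<tau> xs = ys'"
      unfolding \<tau>_def using nx ny s(2)
      by (auto simp: transpose_def intro!: map_idI)
        (metis (no_types, lifting) s(2) imageI list.set_map)+
    then show ?thesis using ys by (simp add: \<tau>_def)
  qed
  ultimately show ?case by blast
qed




lemma tuples_map: "set cs \<subseteq> C \<Longrightarrow> (\<forall>c\<in>C. choice_fun X k c) \<Longrightarrow> Y \<in> ksubsets X k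
   \<Longrightarrow> map (\<lambda>c. c Y) cs \<in> tuples X (length cs)"
  unfolding tuples_def choice_fun_def ksubsets_def by auto

locale setting =
  fixes X :: "'a set" and k :: nat and C :: "('a set \<Rightarrow> 'a) set"
  assumes finX: "finite X" and k2: "2 \<le> k" and kX: "k < card X" and X6: "6 \<le> card X"
    and Cne: "C \<noteq> {}" and Cch: "\<forall>c\<in>C. choice_fun X k c" and Csym: "symmetric_family X k C"
begin

abbreviation F where "F r \<equiv> avg_funs X k C r"

lemma avg_cong:
  assumes "f \<in> F r" "\<And>xs. xs \<in> tuples X r \<Longrightarrow> g xs = f xs"
  shows "g \<in> F r"
proof -
  have rep: "\<And>a. a \<in> X \<Longrightarrow> replicate r a \<in> tuples X r" by (auto simp: tuples_def)
  have "\<And>cs Y. length cs = r \<Longrightarrow> set cs \<subseteq> C \<Longrightarrow> Y \<in> ksubsets X k \<Longrightarrow>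
     g (map (\<lambda>c. c Y) cs) = f (map (\<lambda>c. c Y) cs)"
    using assms(2) tuples_map Cch by metis
  then have "\<And>cs. length cs = r \<Longrightarrow> set cs \<subseteq> C \<Longrightarrow>
     restrict (\<lambda>Y. g (map (\<lambda>c. c Y) cs)) (ksubsets X k) = restrict (\<lambda>Y. f (map (\<lambda>c. c Y) cs)) (ksubsets X k)"
    by (auto intro!: restrict_ext)
  with assms rep show ?thesis unfolding avg_funs_def by auto
qed

lemma proj:
  assumes "i < r" shows "(\<lambda>xs. xs ! i) \<in> F r"
proof -
  have "\<And>cs. length cs = r \<Longrightarrow> set cs \<subseteq> C \<Longrightarrow>
     restrict (\<lambda>Y. map (\<lambda>c. c Y) cs ! i) (ksubsets X k) = cs ! i"
  proof -
    fix cs :: "('a set \<Rightarrow> 'a) list" assume "length cs = r" "set cs \<subseteq> C"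
    then have "cs ! i \<in> C" using assms by auto
    then have "cs ! i \<in> extensional (ksubsets X k)" using Cch by (auto simp: choice_fun_def)
    then show "restrict (\<lambda>Y. map (\<lambda>c. c Y) cs ! i) (ksubsets X k) = cs ! i"
      using \<open>length cs = r\<close> assms by (auto simp: extensional_def)
  qed
  then show ?thesis using assms unfolding avg_funs_def tuples_def
    by (auto dest: nth_mem)
qed

lemma comp:
  assumes f: "f \<in> F m" and len: "length hs = m" and hs: "\<forall>h\<in>set hs. h \<in> F r"
  shows "(\<lambda>xs. f (map (\<lambda>h. h xs) hs)) \<in> F r"
proof -
  have T: "\<And>xs. xs \<in> tuples X r \<Longrightarrow> map (\<lambda>h. h xs) hs \<in> tuples X m"
    using hs len by (auto simp: tuples_def avg_funs_def)
  have I: "\<And>a. a \<in> X \<Longrightarrow> map (\<lambda>h. h (replicate r a)) hs = replicate m a"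
    using hs len by (auto simp: avg_funs_def intro!: replicate_eqI)
  have Cm: "restrict (\<lambda>Y. f (map (\<lambda>h. h (map (\<lambda>c. c Y) cs)) hs)) (ksubsets X k) \<in> C"
    if cs: "length cs = r" "set cs \<subseteq> C" for cs
  proof -
    define ds where "ds = map (\<lambda>h. restrict (\<lambda>Y. h (map (\<lambda>c. c Y) cs)) (ksubsets X k)) hs"
    have "set ds \<subseteq> C" using hs cs unfolding ds_def avg_funs_def by auto
    moreover have "length ds = m" using len ds_def by simp
    ultimately have "restrict (\<lambda>Y. f (map (\<lambda>d. d Y) ds)) (ksubsets X k) \<in> C"
      using f unfolding avg_funs_def by blast
    moreover have "restrict (\<lambda>Y. f (map (\<lambda>d. d Y) ds)) (ksubsets X k) =
       restrict (\<lambda>Y. f (map (\<lambda>h. h (map (\<lambda>c. c Y) cs)) hs)) (ksubsets X k)"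
      by (auto simp: ds_def o_def intro!: restrict_ext)
    ultimately show ?thesis by simp
  qed
  show ?thesis using f T I Cm unfolding avg_funs_def by auto
qed

lemma conj:
  assumes f: "f \<in> F r" and s: "\<sigma> permutes X"
  shows "(\<lambda>xs. \<sigma> (f (map (inv \<sigma>) xs))) \<in> F r"
proof -
  have is_: "inv \<sigma> permutes X" using s by (rule permutes_inv)
  have T: "\<And>xs. xs \<in> tuples X r \<Longrightarrow> map (inv \<sigma>) xs \<in> tuples X r"
    using is_ by (auto simp: tuples_def permutes_in_image)
  have invX: "\<And>z. z \<in> X \<Longrightarrow> inv_into X \<sigma> z = inv \<sigma> z"
    using s by (metis permutes_inv_eq permutes_inverses permutes_in_image permutes_inj inv_into_f_f
        permutes_imp_bij bij_betw_imp_inj_on)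
  have invX2: "\<And>z. z \<in> X \<Longrightarrow> inv_into X (inv \<sigma>) z = \<sigma> z"
    using s is_ by (metis permutes_inv_inv permutes_inv_eq permutes_inverses permutes_in_image inv_into_f_f
        permutes_imp_bij bij_betw_imp_inj_on)
  have kimg: "\<And>Y \<pi>. \<pi> permutes X \<Longrightarrow> Y \<in> ksubsets X k \<Longrightarrow> \<pi> ` Y \<in> ksubsets X k"
    unfolding ksubsets_def
    by (auto simp: permutes_in_image card_image permutes_inj_on intro: inj_on_subset)
  have Cm: "restrict (\<lambda>Y. \<sigma> (f (map (inv \<sigma>) (map (\<lambda>c. c Y) cs)))) (ksubsets X k) \<in> C"
    if cs: "length cs = r" "set cs \<subseteq> C" for cs
  proof -
    define ds where "ds = map (perm_act X k \<sigma>) cs"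
    have "set ds \<subseteq> C" using Csym s cs unfolding ds_def symmetric_family_def by auto
    moreover have "length ds = r" using cs ds_def by simp
    ultimately have hC: "restrict (\<lambda>Y. f (map (\<lambda>d. d Y) ds)) (ksubsets X k) \<in> C" (is "?h \<in> C")
      using f unfolding avg_funs_def by blast
    then have "perm_act X k (inv \<sigma>) ?h \<in> C" using Csym is_ unfolding symmetric_family_def by blast
    moreover have "perm_act X k (inv \<sigma>) ?h =
       restrict (\<lambda>Y. \<sigma> (f (map (inv \<sigma>) (map (\<lambda>c. c Y) cs)))) (ksubsets X k)"
      unfolding perm_act_def[of X k "inv \<sigma>"]
    proof (rule restrict_ext)
      fix Y assume Y: "Y \<in> ksubsets X k"
      have Y': "inv \<sigma> ` Y \<in> ksubsets X k" using kimg[OF is_ Y] .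
      have im: "\<sigma> ` inv \<sigma> ` Y = Y" using s by (simp add: image_comp permutes_inv_o)
      have "map (\<lambda>d. d (inv \<sigma> ` Y)) ds = map (inv \<sigma>) (map (\<lambda>c. c Y) cs)"
      proof -
        have "\<And>c. c \<in> C \<Longrightarrow> perm_act X k \<sigma> c (inv \<sigma> ` Y) = inv \<sigma> (c Y)"
        proof -
          fix c assume "c \<in> C"
          then have "c Y \<in> X" using Cch Y by (auto simp: choice_fun_def ksubsets_def)
          then show "perm_act X k \<sigma> c (inv \<sigma> ` Y) = inv \<sigma> (c Y)"
            using Y' im invX by (simp add: perm_act_def)
        qed
        then show ?thesis using cs by (auto simp: ds_def)
      qed
      moreover have "f (map (\<lambda>d. d (inv \<sigma> ` Y)) ds) \<in> X"
      proof -
        have "map (\<lambda>d. d (inv \<sigma> ` Y)) ds \<in> tuples X r"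
          using tuples_map[OF \<open>set ds \<subseteq> C\<close> Cch Y'] \<open>length ds = r\<close> by simp
        then show ?thesis using f by (auto simp: avg_funs_def)
      qed
      ultimately show "inv_into X (inv \<sigma>) (?h (inv \<sigma> ` Y)) = \<sigma> (f (map (inv \<sigma>) (map (\<lambda>c. c Y) cs)))"
        using Y Y' invX2 by simp
    qed
    ultimately show ?thesis by simp
  qed
  have I: "\<And>a. a \<in> X \<Longrightarrow> \<sigma> (f (map (inv \<sigma>) (replicate r a))) = a"
  proof -
    fix a assume a: "a \<in> X"
    have "inv \<sigma> a \<in> X" using is_ a by (simp add: permutes_in_image)
    then show "\<sigma> (f (map (inv \<sigma>) (replicate r a))) = a"
      using f s by (auto simp: avg_funs_def permutes_inverses)
  qed
  have TX: "\<And>xs. xs \<in> tuples X r \<Longrightarrow> \<sigma> (f (map (inv \<sigma>) xs)) \<in> X"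
    using T f s by (auto simp: avg_funs_def permutes_in_image)
  show ?thesis using TX I Cm unfolding avg_funs_def by auto
qed

end


context setting begin

lemma exists_c:
  assumes Y: "Y \<in> ksubsets X k" and x: "x \<in> Y"
  shows "\<exists>c\<in>C. c Y = x"
proof -
  obtain c0 where c0: "c0 \<in> C" using Cne by auto
  define u where "u = c0 Y"
  have uY: "u \<in> Y" using Cch c0 Y by (auto simp: choice_fun_def u_def)
  have YX: "Y \<subseteq> X" using Y by (auto simp: ksubsets_def)
  define \<pi> where "\<pi> = transpose x u"
  have p: "\<pi> permutes X" unfolding \<pi>_def using YX x uY by (intro permutes_swap_id) auto
  have img: "\<pi> ` Y = Y" unfolding \<pi>_def using x uY
    by (auto simp: transpose_def image_iff)
  have "inv_into X \<pi> u = x"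
    using p x YX by (metis \<pi>_def inv_into_f_f permutes_inj_on subsetD transpose_apply_first)
  then have "perm_act X k \<pi> c0 Y = x" using Y img by (simp add: perm_act_def u_def)
  moreover have "perm_act X k \<pi> c0 \<in> C" using Csym p c0 by (auto simp: symmetric_family_def)
  ultimately show ?thesis by blast
qed

lemma cons2:
  assumes f: "f \<in> F 2" and x: "x \<in> X" and y: "y \<in> X"
  shows "f [x, y] = x \<or> f [x, y] = y"
proof (rule ccontr)
  assume ne: "\<not> (f [x, y] = x \<or> f [x, y] = y)"
  define z where "z = f [x, y]"
  have zX: "z \<in> X" using f x y by (auto simp: avg_funs_def tuples_def z_def)
  have xy: "x \<noteq> y" using ne f x by (auto simp: avg_funs_def numeral_2_eq_2)
  have "k - 2 \<le> card (X - {x, y, z})"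
  proof -
    have "card (X - {x, y, z}) \<ge> card X - 3"
    proof -
      have "card {x,y,z} \<le> 3" by (simp add: card_insert_if)
      moreover have "card (X - {x, y, z}) = card X - card {x,y,z}"
        using finX x y zX by (simp add: card_Diff_subset)
      ultimately show ?thesis by linarith
    qed
    then show ?thesis using kX by linarith
  qed
  then obtain B where B: "B \<subseteq> X - {x, y, z}" "card B = k - 2" "finite B"
    by (meson obtain_subset_with_card_n)
  define Y where "Y = insert x (insert y B)"
  have Yk: "Y \<in> ksubsets X k"
    using B x y xy k2 unfolding Y_def ksubsets_def by (auto simp: card_insert_if)
  have zY: "z \<notin> Y" using B ne unfolding Y_def z_def by auto
  obtain c1 where c1: "c1 \<in> C" "c1 Y = x" using exists_c[OF Yk] Y_def by auto
  obtain c2 where c2: "c2 \<in> C" "c2 Y = y" using exists_c[OF Yk] Y_def by auto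
  have "restrict (\<lambda>Y. f (map (\<lambda>c. c Y) [c1, c2])) (ksubsets X k) \<in> C"
  proof -
    have "length [c1, c2] = 2" "set [c1, c2] \<subseteq> C" using c1 c2 by auto
    then show ?thesis using f unfolding avg_funs_def by blast
  qed
  then have "restrict (\<lambda>Y. f (map (\<lambda>c. c Y) [c1, c2])) (ksubsets X k) Y \<in> Y"
    using Cch Yk by (auto simp: choice_fun_def)
  then have "z \<in> Y" using Yk c1 c2 by (simp add: z_def)
  with zY show False by simp
qed

end



definition sw :: "('a \<times> 'a) set \<Rightarrow> 'a list \<Rightarrow> 'a" where
  "sw T xs = (if (xs!0, xs!1) \<in> T then xs!1 else xs!0)"

context setting begin

definition Dp where "Dp = {(x,y). x \<in> X \<and> y \<in> X \<and> x \<noteq> y}"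
definition SS where "SS = {T. T \<subseteq> Dp \<and> sw T \<in> F 2}"
definition prec where "prec P Q \<longleftrightarrow> (\<forall>T\<in>SS. P \<in> T \<longrightarrow> Q \<in> T)"
definition MP where "MP P = Dp \<inter> \<Inter>{T\<in>SS. P \<in> T}"

lemma tup2: "xs \<in> tuples X 2 \<longleftrightarrow> (\<exists>x y. xs = [x,y] \<and> x \<in> X \<and> y \<in> X)"
  unfolding tuples_def
  by (auto simp: numeral_2_eq_2 length_Suc_conv)

lemma Dp_SS: "Dp \<in> SS"
proof -
  have "sw Dp \<in> F 2"
    by (rule avg_cong[OF proj[of 1 2]]) (auto simp: tup2 sw_def Dp_def)
  then show ?thesis by (simp add: SS_def)
qed

lemma swf_SS:
  assumes f: "f \<in> F 2"
  shows "{(x,y)\<in>Dp. f [x,y] = y} \<in> SS"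
proof -
  have "sw {(x,y)\<in>Dp. f [x,y] = y} \<in> F 2"
  proof (rule avg_cong[OF f])
    fix xs assume "xs \<in> tuples X 2"
    then obtain x y where xy: "xs = [x,y]" "x \<in> X" "y \<in> X" by (auto simp: tup2)
    show "sw {(x,y)\<in>Dp. f [x,y] = y} xs = f xs"
    proof (cases "x = y")
      case True
      then show ?thesis using f xy by (auto simp: sw_def Dp_def avg_funs_def numeral_2_eq_2)
    next
      case False
      then show ?thesis using cons2[OF f xy(2,3)] xy by (auto simp: sw_def Dp_def)
    qed
  qed
  then show ?thesis by (auto simp: SS_def Dp_def)
qed

lemma int_SS:
  assumes "T1 \<in> SS" "T2 \<in> SS" shows "T1 \<inter> T2 \<in> SS"
proof -
  have f1: "sw T1 \<in> F 2" and f2: "sw T2 \<in> F 2" using assms by (auto simp: SS_def)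
  have c: "(\<lambda>xs. sw T1 (map (\<lambda>h. h xs) [(\<lambda>xs. xs!0), sw T2])) \<in> F 2"
    by (rule comp[OF f1]) (auto intro: proj f2)
  have "sw (T1 \<inter> T2) \<in> F 2"
  proof (rule avg_cong[OF c])
    fix xs assume "xs \<in> tuples X 2"
    then obtain x y where xy: "xs = [x,y]" "x \<in> X" "y \<in> X" by (auto simp: tup2)
    have "(x,x) \<notin> T1" using assms by (auto simp: SS_def Dp_def)
    then show "sw (T1 \<inter> T2) xs = sw T1 (map (\<lambda>h. h xs) [(\<lambda>xs. xs!0), sw T2])"
      using xy by (auto simp: sw_def)
  qed
  then show ?thesis using assms by (auto simp: SS_def)
qed

lemma star_SS:
  assumes "T \<in> SS" shows "Dp - converse T \<in> SS"
proof -
  have f1: "sw T \<in> F 2" using assms by (auto simp: SS_def)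
  have c: "(\<lambda>xs. sw T (map (\<lambda>h. h xs) [(\<lambda>xs. xs!1), (\<lambda>xs. xs!0)])) \<in> F 2"
    by (rule comp[OF f1]) (auto intro: proj)
  have "sw (Dp - converse T) \<in> F 2"
  proof (rule avg_cong[OF c])
    fix xs assume "xs \<in> tuples X 2"
    then obtain x y where xy: "xs = [x,y]" "x \<in> X" "y \<in> X" by (auto simp: tup2)
    show "sw (Dp - converse T) xs = sw T (map (\<lambda>h. h xs) [(\<lambda>xs. xs!1), (\<lambda>xs. xs!0)])"
      using xy by (auto simp: sw_def Dp_def)
  qed
  then show ?thesis by (auto simp: SS_def)
qed

lemma conj_SS:
  assumes T: "T \<in> SS" and s: "\<sigma> permutes X" shows "map_prod \<sigma> \<sigma> ` T \<in> SS"
proof -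
  have f1: "sw T \<in> F 2" using T by (auto simp: SS_def)
  have c: "(\<lambda>xs. \<sigma> (sw T (map (inv \<sigma>) xs))) \<in> F 2" by (rule conj[OF f1 s])
  have TD: "T \<subseteq> Dp" using T by (auto simp: SS_def)
  have sub: "map_prod \<sigma> \<sigma> ` T \<subseteq> Dp" using TD s
    by (auto simp: Dp_def permutes_in_image dest: permutes_inj[THEN injD])
  have "sw (map_prod \<sigma> \<sigma> ` T) \<in> F 2"
  proof (rule avg_cong[OF c])
    fix xs assume "xs \<in> tuples X 2"
    then obtain x y where xy: "xs = [x,y]" "x \<in> X" "y \<in> X" by (auto simp: tup2)
    have mem: "(x,y) \<in> map_prod \<sigma> \<sigma> ` T \<longleftrightarrow> (inv \<sigma> x, inv \<sigma> y) \<in> T"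
    proof
      assume "(x,y) \<in> map_prod \<sigma> \<sigma> ` T"
      then obtain u v where "(u,v) \<in> T" "x = \<sigma> u" "y = \<sigma> v" by auto
      then show "(inv \<sigma> x, inv \<sigma> y) \<in> T" using s by (simp add: permutes_inverses)
    next
      assume "(inv \<sigma> x, inv \<sigma> y) \<in> T"
      then have "map_prod \<sigma> \<sigma> (inv \<sigma> x, inv \<sigma> y) \<in> map_prod \<sigma> \<sigma> ` T" by blast
      then show "(x,y) \<in> map_prod \<sigma> \<sigma> ` T" using s by (simp add: permutes_inverses)
    qed
    show "sw (map_prod \<sigma> \<sigma> ` T) xs = \<sigma> (sw T (map (inv \<sigma>) xs))"
      using xy mem s by (auto simp: sw_def permutes_inverses)
  qed
  then show ?thesis using sub by (auto simp: SS_def)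
qed

lemma finDp: "finite Dp"
proof -
  have "Dp \<subseteq> X \<times> X" by (auto simp: Dp_def)
  then show ?thesis using finX finite_subset by blast
qed

lemma inter_SS: "finite \<T> \<Longrightarrow> \<T> \<subseteq> SS \<Longrightarrow> Dp \<inter> \<Inter>\<T> \<in> SS"
proof (induction rule: finite_induct)
  case empty
  then show ?case using Dp_SS by simp
next
  case (insert T \<T>)
  then have "T \<inter> (Dp \<inter> \<Inter>\<T>) \<in> SS" using int_SS[of T "Dp \<inter> \<Inter>\<T>"] by auto
  moreover have "T \<subseteq> Dp" using insert by (auto simp: SS_def)
  ultimately show ?case by (simp add: Int_left_commute Int_absorb2 Int_assoc) 
qed

lemma MP_SS: "MP P \<in> SS"
proof -
  have "{T\<in>SS. P \<in> T} \<subseteq> Pow Dp" by (auto simp: SS_def)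
  then have "finite {T\<in>SS. P \<in> T}" using finDp by (meson finite_Pow_iff finite_subset)
  then show ?thesis unfolding MP_def by (intro inter_SS) auto
qed

lemma MP_mem: "P \<in> Dp \<Longrightarrow> P \<in> MP P" by (auto simp: MP_def)

lemma MP_prec: "Q \<in> MP P \<Longrightarrow> prec P Q" by (auto simp: MP_def prec_def)

lemma prec_trans: "prec P Q \<Longrightarrow> prec Q R \<Longrightarrow> prec P R" by (auto simp: prec_def)

lemma prec_conj:
  assumes s: "\<sigma> permutes X" and pq: "prec P Q"
  shows "prec (map_prod \<sigma> \<sigma> P) (map_prod \<sigma> \<sigma> Q)"
  unfolding prec_def
proof (intro ballI impI)
  fix T assume T: "T \<in> SS" "map_prod \<sigma> \<sigma> P \<in> T"
  have si: "inv \<sigma> permutes X" using s by (rule permutes_inv)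
  have T': "map_prod (inv \<sigma>) (inv \<sigma>) ` T \<in> SS" by (rule conj_SS[OF T(1) si])
  have "map_prod (inv \<sigma>) (inv \<sigma>) (map_prod \<sigma> \<sigma> P) \<in> map_prod (inv \<sigma>) (inv \<sigma>) ` T"
    using T(2) by blast
  then have "P \<in> map_prod (inv \<sigma>) (inv \<sigma>) ` T" using s
    by (cases P) (simp add: permutes_inverses)
  then have "Q \<in> map_prod (inv \<sigma>) (inv \<sigma>) ` T" using pq T' by (auto simp: prec_def)
  then show "map_prod \<sigma> \<sigma> Q \<in> T" using s by (cases Q) (auto simp: permutes_inverses)
qed

lemma prec_rev:
  assumes pq: "prec P Q" and P: "P \<in> Dp" and Q: "Q \<in> Dp"
  shows "prec (prod.swap Q) (prod.swap P)"
  unfolding prec_def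
proof (intro ballI impI)
  fix T assume T: "T \<in> SS" "prod.swap Q \<in> T"
  show "prod.swap P \<in> T"
  proof (rule ccontr)
    assume "prod.swap P \<notin> T"
    then have "P \<in> Dp - converse T" using P by (cases P) auto
    then have "Q \<in> Dp - converse T" using pq star_SS[OF T(1)] by (auto simp: prec_def)
    then show False using T(2) by (cases Q) auto
  qed
qed

end


context setting begin

lemma transfer:
  assumes "distinct xs" "distinct ys" "length xs = length ys" "set xs \<subseteq> X" "set ys \<subseteq> X"
    "i < length xs" "j < length xs" "l < length xs" "m < length xs"
    "prec (xs!i, xs!j) (xs!l, xs!m)"
  shows "prec (ys!i, ys!j) (ys!l, ys!m)"
proof -
  obtain \<sigma> where s: "\<sigma> permutes X" "map \<sigma> xs = ys" using perm_map assms(1-5) by blast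
  have "prec (map_prod \<sigma> \<sigma> (xs!i, xs!j)) (map_prod \<sigma> \<sigma> (xs!l, xs!m))"
    by (rule prec_conj[OF s(1) assms(10)])
  then show ?thesis using s(2) assms(6-9) by auto
qed

lemma fresh: "finite A \<Longrightarrow> card A < card X \<Longrightarrow> \<exists>z\<in>X. z \<notin> A"
  by (metis card_mono not_le subsetI)

lemma contra:
  assumes NT: "\<exists>P\<in>Dp. \<exists>Q\<in>Dp. \<not> prec P Q"
    and d: "distinct [x,y,u,v]" "set [x,y,u,v] \<subseteq> X" and pr: "prec (x,y) (u,v)"
  shows False
proof -
  obtain p1 p2 q1 q2 where P: "(p1,p2) \<in> Dp" and Q: "(q1,q2) \<in> Dp" and np: "\<not> prec (p1,p2) (q1,q2)"
    using NT by auto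
  have c4: "card {p1,p2,q1,q2} \<le> 4" by (simp add: card_insert_if)
  obtain r where r: "r \<in> X" "r \<notin> {p1,p2,q1,q2}" using fresh[of "{p1,p2,q1,q2}"] c4 X6 by auto
  have c5: "card {r,p1,p2,q1,q2} \<le> 5" by (simp add: card_insert_if)
  obtain s where s: "s \<in> X" "s \<notin> {r,p1,p2,q1,q2}" using fresh[of "{r,p1,p2,q1,q2}"] c5 X6 by auto
  have 1: "prec (p1,p2) (r,s)"
    using transfer[of "[x,y,u,v]" "[p1,p2,r,s]" 0 1 2 3] d pr P r s by (auto simp: Dp_def)
  have 2: "prec (r,s) (q1,q2)"
    using transfer[of "[x,y,u,v]" "[r,s,q1,q2]" 0 1 2 3] d pr Q r s by (auto simp: Dp_def)
  show False using prec_trans[OF 1 2] np by simp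
qed

lemma key:
  assumes NT: "\<exists>P\<in>Dp. \<exists>Q\<in>Dp. \<not> prec P Q"
    and pq: "p \<in> X" "q \<in> X" "p \<noteq> q" and uv: "(u,v) \<in> Dp" and pr: "prec (p,q) (u,v)"
  shows "(u,v) = (p,q) \<or> (u,v) = (q,p)"
proof (rule ccontr)
  assume nc: "\<not> ?thesis"
  have u: "u \<in> X" and v: "v \<in> X" and uv': "u \<noteq> v" using uv by (auto simp: Dp_def)
  have c3: "\<And>a b c. card {a,b,c::'a} < card X" using X6 by (simp add: card_insert_if)
  consider "u = p" | "v = p" | "u = q" | "v = q" | "u \<notin> {p,q}" "v \<notin> {p,q}" by blast
  then show False
  proof cases
    case 1
    then have w: "v \<noteq> p" "v \<noteq> q" using nc uv' by auto
    obtain z where z: "z \<in> X" "z \<notin> {p,q,v}" using fresh[of "{p,q,v}"] c3 by auto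
    have a: "prec (v,z) (v,p)"
      using transfer[of "[p,q,v]" "[v,z,p]" 0 1 0 2] pr 1 w pq v z by auto
    have b: "prec (p,v) (z,v)" using prec_rev[OF a] pq v z w by (auto simp: Dp_def)
    have "prec (p,q) (z,v)" using prec_trans[OF _ b] pr 1 by simp
    then show False using contra[OF NT, of p q z v] pq z v w by auto
  next
    case 2
    then have w: "u \<noteq> p" "u \<noteq> q" using nc uv' by auto
    obtain z where z: "z \<in> X" "z \<notin> {p,q,u}" using fresh[of "{p,q,u}"] c3 by auto
    have a: "prec (u,p) (z,u)"
      using transfer[of "[p,q,u]" "[u,p,z]" 0 1 2 0] pr 2 w pq u z by auto
    have "prec (p,q) (z,u)" using prec_trans[OF _ a] pr 2 by simp
    then show False using contra[OF NT, of p q z u] pq z u w by auto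
  next
    case 3
    then have w: "v \<noteq> p" "v \<noteq> q" using nc uv' by auto
    obtain z where z: "z \<in> X" "z \<notin> {p,q,v}" using fresh[of "{p,q,v}"] c3 by auto
    have a: "prec (q,v) (v,z)"
      using transfer[of "[p,q,v]" "[q,v,z]" 0 1 1 2] pr 3 w pq v z by auto
    have "prec (p,q) (v,z)" using prec_trans[OF _ a] pr 3 by simp
    then show False using contra[OF NT, of p q v z] pq z v w by auto
  next
    case 4
    then have w: "u \<noteq> p" "u \<noteq> q" using nc uv' by auto
    obtain z where z: "z \<in> X" "z \<notin> {p,q,u}" using fresh[of "{p,q,u}"] c3 by auto
    have a: "prec (u,p) (q,p)"
      using transfer[of "[p,q,u]" "[u,p,q]" 0 1 2 1] pr 4 w pq u by auto
    have b: "prec (p,q) (p,u)" using prec_rev[OF a] pq u w by (auto simp: Dp_def)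
    have c: "prec (p,u) (z,u)"
      using transfer[of "[p,q,u]" "[p,u,z]" 0 1 2 1] pr 4 w pq u z by auto
    have "prec (p,q) (z,u)" using prec_trans[OF b c] .
    then show False using contra[OF NT, of p q z u] pq z u w by auto
  next
    case 5
    then show False using contra[OF NT, of p q u v] pq u v uv' pr by auto
  qed
qed

end



definition hh :: "bool \<Rightarrow> 'a \<Rightarrow> 'a \<Rightarrow> 'a \<Rightarrow> 'a \<Rightarrow> 'a" where
  "hh R p q x y = (if x = p \<and> y = q then q else if x = q \<and> y = p \<and> R then p else x)"

lemma chain:
  assumes "distinct [a0,a1,a2,a3::'a]" "\<not> distinct [b0,b1,b2,b3]"
  shows "hh R1 a0 a1 b0 (hh R2 a3 a1 (hh R3 a2 a3 (hh R4 a0 a2 b0 b2) b3) b1) = b0"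
  using assms unfolding hh_def by auto

lemma chain2:
  assumes "distinct [a0,a1,a2,a3::'a]"
  shows "hh R1 a0 a1 a0 (hh R2 a3 a1 (hh R3 a2 a3 (hh R4 a0 a2 a0 a2) a3) a1) = a1"
  using assms unfolding hh_def by auto



context setting begin

lemma sw_MP:
  assumes NT: "\<exists>P\<in>Dp. \<exists>Q\<in>Dp. \<not> prec P Q"
    and "p \<in> X" "q \<in> X" "p \<noteq> q" "x \<in> X" "y \<in> X"
  shows "sw (MP (p,q)) [x,y] = hh ((q,p) \<in> MP (p,q)) p q x y"
proof -
  have sub: "MP (p,q) \<subseteq> Dp" by (auto simp: MP_def)
  have pq: "(p,q) \<in> MP (p,q)" using assms by (intro MP_mem) (auto simp: Dp_def)
  have only: "(x,y) \<in> MP (p,q) \<Longrightarrow> (x,y) = (p,q) \<or> (x,y) = (q,p)"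
    using key[OF NT assms(2-4)] sub MP_prec by blast
  show ?thesis using pq only unfolding sw_def hh_def by auto
qed

lemma hh_in: "hh R p q x y = x \<or> hh R p q x y = y"
  unfolding hh_def by simp

lemma hh_X: assumes "x \<in> X" "y \<in> X" shows "hh R p q x y \<in> X"
  using hh_in[of R p q x y] assms by (elim disjE) simp_all

lemma NT_of:
  assumes f: "f \<in> F 2" and nm: "\<not> monarchy X 2 f"
  shows "\<exists>P\<in>Dp. \<exists>Q\<in>Dp. \<not> prec P Q"
proof -
  define T where "T = {(x,y)\<in>Dp. f [x,y] = y}"
  have T: "T \<in> SS" unfolding T_def by (rule swf_SS[OF f])
  have id: "\<And>x. x \<in> X \<Longrightarrow> f [x,x] = x" using f by (auto simp: avg_funs_def numeral_2_eq_2)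
  have ex1: "\<exists>P. P \<in> T"
  proof (rule ccontr)
    assume e: "\<not> (\<exists>P. P \<in> T)"
    have "\<forall>xs\<in>tuples X 2. f xs = xs ! 0"
    proof
      fix xs assume "xs \<in> tuples X 2"
      then obtain x y where xy: "xs = [x,y]" "x \<in> X" "y \<in> X" by (auto simp: tup2)
      show "f xs = xs ! 0"
      proof (cases "x = y")
        case True then show ?thesis using xy id by simp
      next
        case False
        then have "(x,y) \<notin> T" using e by blast
        then have "f [x,y] \<noteq> y" using False xy unfolding T_def Dp_def by blast
        then show ?thesis using cons2[OF f xy(2,3)] xy by simp
      qed
    qed
    then have "monarchy X 2 f" unfolding monarchy_def by (intro exI[of _ 0]) simp
    then show False using nm by simp
  qed
  have ex2: "\<exists>Q. Q \<in> Dp \<and> Q \<notin> T"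
  proof (rule ccontr)
    assume e: "\<not> (\<exists>Q. Q \<in> Dp \<and> Q \<notin> T)"
    have "\<forall>xs\<in>tuples X 2. f xs = xs ! 1"
    proof
      fix xs assume "xs \<in> tuples X 2"
      then obtain x y where xy: "xs = [x,y]" "x \<in> X" "y \<in> X" by (auto simp: tup2)
      show "f xs = xs ! 1"
      proof (cases "x = y")
        case True then show ?thesis using xy id by simp
      next
        case False
        then have "(x,y) \<in> Dp" using xy unfolding Dp_def by blast
        then have "(x,y) \<in> T" using e by blast
        then have "f [x,y] = y" unfolding T_def by blast
        then show ?thesis using xy by simp
      qed
    qed
    then have "monarchy X 2 f" unfolding monarchy_def by (intro exI[of _ 1]) simp
    then show False using nm by simp
  qed
  obtain P where P: "P \<in> T" using ex1 by blast
  obtain Q where Q: "Q \<in> Dp" "Q \<notin> T" using ex2 by blast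
  have np: "\<not> prec P Q" using T P Q(2) unfolding prec_def by blast
  have "P \<in> Dp" using P unfolding T_def by blast
  then show ?thesis using np Q(1) by blast
qed

lemma main:
  assumes NT: "\<exists>P\<in>Dp. \<exists>Q\<in>Dp. \<not> prec P Q"
    and a: "a \<in> tuples X 4" and da: "distinct a"
  shows "\<exists>g\<in>F 4. (\<forall>b\<in>tuples X 4. \<not> distinct b \<longrightarrow> g b = b ! 0) \<and> g a = a ! 1"
proof -
  obtain a0 a1 a2 a3 where aa: "a = [a0,a1,a2,a3]" using a
    by (auto simp: tuples_def numeral_eq_Suc length_Suc_conv)
  have aX: "a0 \<in> X" "a1 \<in> X" "a2 \<in> X" "a3 \<in> X" using a aa by (auto simp: tuples_def)
  have dA: "distinct [a0,a1,a2,a3]" using da aa by simp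
  define H where "H p q = sw (MP (p,q))" for p q
  have HF: "H p q \<in> F 2" for p q using MP_SS by (auto simp: H_def SS_def)
  define t1 where "t1 = (\<lambda>xs. H a0 a2 (map (\<lambda>h. h xs) [(\<lambda>xs. xs!0), (\<lambda>xs. xs!2)]))"
  have t1: "t1 \<in> F 4" unfolding t1_def by (rule comp[OF HF]) (auto intro: proj)
  define t2 where "t2 = (\<lambda>xs. H a2 a3 (map (\<lambda>h. h xs) [t1, (\<lambda>xs. xs!3)]))"
  have t2: "t2 \<in> F 4" unfolding t2_def by (rule comp[OF HF]) (auto intro: proj t1)
  define t3 where "t3 = (\<lambda>xs. H a3 a1 (map (\<lambda>h. h xs) [t2, (\<lambda>xs. xs!1)]))"
  have t3: "t3 \<in> F 4" unfolding t3_def by (rule comp[OF HF]) (auto intro: proj t2)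
  define g where "g = (\<lambda>xs. H a0 a1 (map (\<lambda>h. h xs) [(\<lambda>xs. xs!0), t3]))"
  have g: "g \<in> F 4" unfolding g_def by (rule comp[OF HF]) (auto intro: proj t3)
  have geq: "g xs = H a0 a1 [xs!0, H a3 a1 [H a2 a3 [H a0 a2 [xs!0, xs!2], xs!3], xs!1]]" for xs
    by (simp add: g_def t1_def t2_def t3_def)
  define R where "R p q = ((q,p) \<in> MP (p,q))" for p q
  have Hs: "H p q [x,y] = hh (R p q) p q x y" if "p \<in> X" "q \<in> X" "p \<noteq> q" "x \<in> X" "y \<in> X"
    for p q x y using sw_MP[OF NT that] by (simp add: H_def R_def)
  have ev: "g [b0,b1,b2,b3] = hh (R a0 a1) a0 a1 b0 (hh (R a3 a1) a3 a1
        (hh (R a2 a3) a2 a3 (hh (R a0 a2) a0 a2 b0 b2) b3) b1)"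
    if "b0 \<in> X" "b1 \<in> X" "b2 \<in> X" "b3 \<in> X" for b0 b1 b2 b3
  proof -
    have d: "a0 \<noteq> a1" "a0 \<noteq> a2" "a2 \<noteq> a3" "a3 \<noteq> a1" using dA by auto
    define v1 where "v1 = hh (R a0 a2) a0 a2 b0 b2"
    define v2 where "v2 = hh (R a2 a3) a2 a3 v1 b3"
    define v3 where "v3 = hh (R a3 a1) a3 a1 v2 b1"
    have 1: "H a0 a2 [b0, b2] = v1" unfolding v1_def by (rule Hs[OF aX(1) aX(3) d(2) that(1) that(3)])
    have x1: "v1 \<in> X" unfolding v1_def by (rule hh_X[OF that(1) that(3)])
    have 2: "H a2 a3 [v1, b3] = v2" unfolding v2_def by (rule Hs[OF aX(3) aX(4) d(3) x1 that(4)])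
    have x2: "v2 \<in> X" unfolding v2_def by (rule hh_X[OF x1 that(4)])
    have 3: "H a3 a1 [v2, b1] = v3" unfolding v3_def by (rule Hs[OF aX(4) aX(2) d(4) x2 that(2)])
    have x3: "v3 \<in> X" unfolding v3_def by (rule hh_X[OF x2 that(2)])
    have 4: "H a0 a1 [b0, v3] = hh (R a0 a1) a0 a1 b0 v3" by (rule Hs[OF aX(1) aX(2) d(1) that(1) x3])
    have e: "g [b0,b1,b2,b3] = H a0 a1 [b0, H a3 a1 [H a2 a3 [H a0 a2 [b0, b2], b3], b1]]"
      unfolding geq by simp
    have "g [b0,b1,b2,b3] = hh (R a0 a1) a0 a1 b0 v3" unfolding e 1 2 3 4 ..
    then show ?thesis by (simp only: v3_def v2_def v1_def)
  qed
  have P1: "\<forall>b\<in>tuples X 4. \<not> distinct b \<longrightarrow> g b = b ! 0"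
  proof (intro ballI impI)
    fix b assume b: "b \<in> tuples X 4" "\<not> distinct b"
    obtain b0 b1 b2 b3 where bb: "b = [b0,b1,b2,b3]" using b
      by (auto simp: tuples_def numeral_eq_Suc length_Suc_conv)
    have "b0 \<in> X" "b1 \<in> X" "b2 \<in> X" "b3 \<in> X" using b bb by (auto simp: tuples_def)
    moreover have nd: "\<not> distinct [b0,b1,b2,b3]" using b(2) unfolding bb .
    ultimately show "g b = b ! 0" unfolding bb nth_Cons_0 by (subst ev) (assumption+, rule chain[OF dA nd])
  qed
  have P2: "g a = a ! 1" unfolding aa ev[OF aX] chain2[OF dA] by simp
  show ?thesis using P1 P2 g by (intro bexI[of _ g] conjI)
qed

end


theorem claim13p7:
  fixes X :: "'a set" and k :: nat and C :: "('a set \<Rightarrow> 'a) set" and a :: "'a list"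
  assumes "finite X" and "card X \<ge> 5"
    and "5 < k" and "k < card X - 5"
    and "C \<noteq> {}" and "\<forall>c\<in>C. choice_fun X k c"
    and "symmetric_family X k C"
    and "r_index_is X k C 2"
    and "a \<in> tuples X 4" and "distinct a"
  shows "\<exists>g\<in>avg_funs X k C 4.
           (\<forall>b\<in>tuples X 4. \<not> distinct b \<longrightarrow> g b = b ! 0) \<and> g a = a ! 1"
proof -
  have st: "setting X k C"
  proof (rule setting.intro)
    show "finite X" by (rule assms(1))
    show "2 \<le> k" using assms(3) by linarith
    show "k < card X" using assms(4) by linarith
    show "6 \<le> card X" using assms(3,4) by linarith
    show "C \<noteq> {}" by (rule assms(5))
    show "\<forall>c\<in>C. choice_fun X k c" by (rule assms(6))
    show "symmetric_family X k C" by (rule assms(7))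
  qed
  interpret setting X k C by (rule st)
  obtain f where f: "f \<in> avg_funs X k C 2" "\<not> monarchy X 2 f"
    using assms(8) unfolding r_index_is_def by blast
  show ?thesis using main[OF NT_of[OF f] assms(9,10)] .
qed

end
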